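(* There exists a constant $C>0$ such that for all $v=(v^1,\dots,v^{n_{\mathcal E}})\in L^2_{H^1}(\mathcal N;\mathbb{R}^3)$ and all $V\in\mathbb{R}^{3n_{\mathcal V}}$, \[ \|v\|_{L^2(\mathcal N;\mathbb{R}^3)}\le C\Big(\|v'\|^2_{L^2(\mathcal N;\mathbb{R}^3)}+\Big|\int_{\mathcal N}v\Big|^2+\big|v(0)-(A^-_I)^TV\big|^2+\big|v(\ell)-(A^+_I)^TV\big|^2\Big)^{1/2}, \] where $v'=(\partial_sv^1,\dots,\partial_sv^{n_{\mathcal E}})$, $v(0)=[v^1(0),\dots,v^{n_{\mathcal E}}(0)]^T\in\mathbb{R}^{3n_{\mathcal E}}$, $v(\ell)=[v^1(\ell^1),\dots,v^{n_{\mathcal E}}(\ell^{n_{\mathcal E}})]^T\in\mathbb{R}^{3n_{\mathcal E}}$, and $|\cdot|$ denotes the Euclidean norm.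
   Context: A finite connected graph with vertices $j=1,\dots,n_{\mathcal V}$ and oriented edges $i=1,\dots,n_{\mathcal E}$; edge $i$ has length $\ell^i>0$ and is identified with the interval $[0,\ell^i]$, $s=0$ corresponding to the vertex it leaves and $s=\ell^i$ to the vertex it enters. $J_j^-$ ($J_j^+$) is the set of edges leaving (entering) vertex $j$. $A^+_{I}\in\mathbb{R}^{3n_{\mathcal V}\times 3n_{\mathcal E}}$ is the block matrix whose $3\times3$ block in block row $j$, block column $i$ is $I_3$ if $i\in J_j^+$ and $0$ otherwise; $A^-_I$ is defined likewise with $J_j^-$. $L^2(\mathcal N;\mathbb{R}^3)=\prod_iL^2(0,\ell^i;\mathbb{R}^3)$, $L^2_{H^1}(\mathcal N;\mathbb{R}^3)=\prod_iH^1(0,\ell^i;\mathbb{R}^3)$ (no continuity at vertices), with norms $\|y\|=(\sum_i\|y^i\|^2)^{1/2}$; $\int_{\mathcal N}v=\sum_i\int_0^{\ell^i}v^i\,ds$. *)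

theory Defs
  imports "HOL-Analysis.Analysis"
begin

(* Graph: vertices {1..nV}, edges {1..nE}; edge i leaves vertex src i and enters tgt i. *)

definition graph_edges :: "nat \<Rightarrow> (nat \<Rightarrow> nat) \<Rightarrow> (nat \<Rightarrow> nat) \<Rightarrow> (nat \<times> nat) set" where
  "graph_edges nE src tgt = (\<lambda>i. (src i, tgt i)) ` {1..nE}"

definition connected_graph :: "nat \<Rightarrow> nat \<Rightarrow> (nat \<Rightarrow> nat) \<Rightarrow> (nat \<Rightarrow> nat) \<Rightarrow> bool" where
  "connected_graph nV nE src tgt \<longleftrightarrow> nV \<ge> 1 \<and>
     (\<forall>i\<in>{1..nE}. src i \<in> {1..nV} \<and> tgt i \<in> {1..nV}) \<and>
     (\<forall>j\<in>{1..nV}. \<forall>k\<in>{1..nV}.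
        (j, k) \<in> (graph_edges nE src tgt \<union> (graph_edges nE src tgt)\<inverse>)\<^sup>*)"

definition J_minus :: "nat \<Rightarrow> (nat \<Rightarrow> nat) \<Rightarrow> nat \<Rightarrow> nat set" where
  "J_minus nE src j = {i\<in>{1..nE}. src i = j}"

definition J_plus :: "nat \<Rightarrow> (nat \<Rightarrow> nat) \<Rightarrow> nat \<Rightarrow> nat set" where
  "J_plus nE tgt j = {i\<in>{1..nE}. tgt i = j}"

(* i-th 3-block of (A_I^-)^T V and (A_I^+)^T V, for V = (V_1,...,V_nV) in (R^3)^nV *)
definition AmT :: "nat \<Rightarrow> nat \<Rightarrow> (nat \<Rightarrow> nat) \<Rightarrow> (nat \<Rightarrow> real^3) \<Rightarrow> nat \<Rightarrow> real^3" where
  "AmT nV nE src V i = (\<Sum>j\<in>{j\<in>{1..nV}. i \<in> J_minus nE src j}. V j)"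

definition ApT :: "nat \<Rightarrow> nat \<Rightarrow> (nat \<Rightarrow> nat) \<Rightarrow> (nat \<Rightarrow> real^3) \<Rightarrow> nat \<Rightarrow> real^3" where
  "ApT nV nE tgt V i = (\<Sum>j\<in>{j\<in>{1..nV}. i \<in> J_plus nE tgt j}. V j)"

(* v \<in> H^1(0,l;R^3) with weak derivative w: w measurable and square integrable on [0,l],
   and v(s) = v(0) + \<integral>_0^s w  for s in [0,l] (absolutely continuous representative). *)
definition H1_with_deriv :: "real \<Rightarrow> (real \<Rightarrow> real^3) \<Rightarrow> (real \<Rightarrow> real^3) \<Rightarrow> bool" where
  "H1_with_deriv l v w \<longleftrightarrow>
     set_borel_measurable lborel {0..l} w \<and>
     set_integrable lborel {0..l} (\<lambda>s. (norm (w s))\<^sup>2) \<and>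
     (\<forall>s\<in>{0..l}. v s = v 0 + (LINT t:{0..s}|lborel. w t))"

definition L2N_sq :: "nat \<Rightarrow> (nat \<Rightarrow> real) \<Rightarrow> (nat \<Rightarrow> real \<Rightarrow> real^3) \<Rightarrow> real" where
  "L2N_sq nE len v = (\<Sum>i\<in>{1..nE}. LINT s:{0..len i}|lborel. (norm (v i s))\<^sup>2)"

definition intN :: "nat \<Rightarrow> (nat \<Rightarrow> real) \<Rightarrow> (nat \<Rightarrow> real \<Rightarrow> real^3) \<Rightarrow> real^3" where
  "intN nE len v = (\<Sum>i\<in>{1..nE}. LINT s:{0..len i}|lborel. v i s)"

end

theory Submission
  imports Defs
begin


lemma H1_facts:
  fixes l :: real
  assumes H: "H1_with_deriv l v w" and l: "l \<ge> 0"
  shows "w integrable_on {0..l}"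
    and "(\<lambda>s. (norm (w s))\<^sup>2) integrable_on {0..l}"
    and "\<And>s. s \<in> {0..l} \<Longrightarrow> v s = v 0 + integral {0..s} w"
    and "continuous_on {0..l} v"
proof -
  have meas: "set_borel_measurable lborel {0..l} w"
    and sq: "set_integrable lborel {0..l} (\<lambda>s. (norm (w s))\<^sup>2)"
    and rep: "\<forall>s\<in>{0..l}. v s = v 0 + (LINT t:{0..s}|lborel. w t)"
    using H unfolding H1_with_deriv_def by blast+
  have one: "set_integrable lborel {0..l} (\<lambda>s. 1::real)"
    by (rule borel_integrable_atLeastAtMost') (rule continuous_on_const)
  have "set_integrable lborel {0..l} (\<lambda>s. 1 + (norm (w s))\<^sup>2)"
    using one sq unfolding set_integrable_def
    by (simp add: distrib_left)
  then have wi: "set_integrable lborel {0..l} w"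
  proof (rule set_integrable_bound[OF _ meas])
    show "AE x in lborel. x \<in> {0..l} \<longrightarrow> norm (w x) \<le> norm (1 + (norm (w x))\<^sup>2)"
    proof (intro AE_I2 impI)
      fix x
      have "norm (w x) \<le> 1 + (norm (w x))\<^sup>2"
      proof -
        have "0 \<le> (norm (w x) - 1)\<^sup>2" by simp
        then have "2 * norm (w x) \<le> (norm (w x))\<^sup>2 + 1" by (simp add: power2_diff)
        then show ?thesis using norm_ge_zero[of "w x"] by linarith
      qed
      then show "norm (w x) \<le> norm (1 + (norm (w x))\<^sup>2)" by simp
    qed
  qed
  show wI: "w integrable_on {0..l}" using set_borel_integral_eq_integral(1)[OF wi] .
  show "(\<lambda>s. (norm (w s))\<^sup>2) integrable_on {0..l}" using set_borel_integral_eq_integral(1)[OF sq] .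
  show rep2: "v s = v 0 + integral {0..s} w" if "s \<in> {0..l}" for s
  proof -
    have "set_integrable lborel {0..s} w"
      by (rule set_integrable_subset[OF wi]) (use that in auto)
    then show ?thesis using rep that set_borel_integral_eq_integral(2) by metis
  qed
  have "continuous_on {0..l} (\<lambda>s. v 0 + integral {0..s} w)"
    by (intro continuous_intros indefinite_integral_continuous_1 wI)
  then show "continuous_on {0..l} v"
    by (rule continuous_on_eq) (erule rep2[symmetric])
qed




lemma H1_bound:
  fixes l t :: real
  assumes H: "H1_with_deriv l v w" and l: "l \<ge> 0" and t: "t > 0" and s: "s \<in> {0..l}"
  shows "norm (v s - v 0) \<le> t * l / 2 + (LINT x:{0..l}|lborel. (norm (w x))\<^sup>2) / (2 * t)"
proof -
  let ?g = "\<lambda>x. (norm (w x))\<^sup>2"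
  have sq: "set_integrable lborel {0..l} ?g" using H unfolding H1_with_deriv_def by blast+
  have W: "(LINT x:{0..l}|lborel. ?g x) = integral {0..l} ?g"
    using set_borel_integral_eq_integral(2)[OF sq] .
  note F = H1_facts[OF H l]
  let ?h = "\<lambda>x. t / 2 + ?g x / (2 * t)"
  have hI: "?h integrable_on {0..l}"
    using F(2) t by (intro integrable_add integrable_const_ivl) simp
  have hI2: "?h integrable_on {0..s}"
    by (rule integrable_on_subinterval[OF hI]) (use s in auto)
  have wI2: "w integrable_on {0..s}"
    by (rule integrable_on_subinterval[OF F(1)]) (use s in auto)
  have pt: "norm (w x) \<le> ?h x" for x
  proof -
    have "0 \<le> (norm (w x) - t)\<^sup>2" by simp
    then have "2 * t * norm (w x) \<le> t\<^sup>2 + (norm (w x))\<^sup>2" by (simp add: power2_diff algebra_simps)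
    then show ?thesis using t by (simp add: field_simps power2_eq_square)
  qed
  have "norm (v s - v 0) = norm (integral {0..s} w)" using F(3)[OF s] by simp
  also have "\<dots> \<le> integral {0..s} ?h"
    by (rule integral_norm_bound_integral[OF wI2 hI2 pt])
  also have "\<dots> \<le> integral {0..l} ?h"
    by (rule integral_subset_le[OF _ hI2 hI]) (use s t in auto)
  also have "integral {0..l} ?h = t * l / 2 + integral {0..l} ?g / (2 * t)"
  proof -
    have "integral {0..l} ?h = integral {0..l} (\<lambda>x. t/2) + integral {0..l} (\<lambda>x. ?g x / (2*t))"
      by (rule integral_add) (use F(2) t in auto)
    then show ?thesis using l by simp
  qed
  finally show ?thesis using W by simp
qed




lemma v_int_bound:
  fixes l B :: real and v :: "real \<Rightarrow> real^3"
  assumes l: "l \<ge> 0" and cont: "continuous_on {0..l} v"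
    and bd: "\<And>s. s \<in> {0..l} \<Longrightarrow> norm (v s - c) \<le> B"
  shows "norm ((LINT s:{0..l}|lborel. v s) - l *\<^sub>R c) \<le> l * B"
proof -
  have si: "set_integrable lborel {0..l} v" by (rule borel_integrable_atLeastAtMost'[OF cont])
  have eq: "(LINT s:{0..l}|lborel. v s) = integral {0..l} v"
    using set_borel_integral_eq_integral(2)[OF si] .
  have vI: "v integrable_on {0..l}" using set_borel_integral_eq_integral(1)[OF si] .
  have "integral {0..l} (\<lambda>s. v s - c) = integral {0..l} v - integral {0..l} (\<lambda>s. c)"
    by (rule integral_diff[OF vI]) (rule integrable_const_ivl)
  also have "\<dots> = integral {0..l} v - l *\<^sub>R c" using l by simp
  finally have e2: "integral {0..l} (\<lambda>s. v s - c) = integral {0..l} v - l *\<^sub>R c" .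
  have "norm (integral {0..l} (\<lambda>s. v s - c)) \<le> B * (l - 0)"
    by (rule integral_bound) (use l bd in \<open>auto intro!: continuous_intros cont\<close>)
  then show ?thesis using eq e2 by (simp add: mult.commute)
qed

lemma v_sq_bound:
  fixes l B :: real and v :: "real \<Rightarrow> real^3"
  assumes l: "l \<ge> 0" and cont: "continuous_on {0..l} v"
    and bd: "\<And>s. s \<in> {0..l} \<Longrightarrow> norm (v s) \<le> B"
  shows "(LINT s:{0..l}|lborel. (norm (v s))\<^sup>2) \<le> l * B\<^sup>2"
proof -
  have c2: "continuous_on {0..l} (\<lambda>s. (norm (v s))\<^sup>2)" by (intro continuous_intros cont)
  have si: "set_integrable lborel {0..l} (\<lambda>s. (norm (v s))\<^sup>2)"
    by (rule borel_integrable_atLeastAtMost'[OF c2])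
  have eq: "(LINT s:{0..l}|lborel. (norm (v s))\<^sup>2) = integral {0..l} (\<lambda>s. (norm (v s))\<^sup>2)"
    using set_borel_integral_eq_integral(2)[OF si] .
  have "norm (integral {0..l} (\<lambda>s. (norm (v s))\<^sup>2)) \<le> B\<^sup>2 * (l - 0)"
  proof (rule integral_bound[OF l c2])
    fix t assume "t \<in> {0..l}"
    then show "norm ((norm (v t))\<^sup>2) \<le> B\<^sup>2" using bd[of t] by (simp add: power_mono)
  qed
  then show ?thesis using eq by (simp add: mult.commute)
qed

lemma finite_unif:
  fixes f :: "'a \<Rightarrow> 'b \<Rightarrow> real"
  assumes "finite A" and "\<And>x. x \<in> A \<Longrightarrow> \<exists>N::real. \<forall>V. f x V \<le> N * D V"
    and D: "\<And>V. D V \<ge> 0"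
  shows "\<exists>N. \<forall>x\<in>A. \<forall>V. f x V \<le> N * D V"
  using assms(1,2)
proof (induction A rule: finite_induct)
  case empty then show ?case by auto
next
  case (insert a A)
  then obtain N1 where N1: "\<forall>V. f a V \<le> N1 * D V" by blast
  from insert.IH insert.prems obtain N2 where N2: "\<forall>x\<in>A. \<forall>V. f x V \<le> N2 * D V" by blast
  have m: "N * D V \<le> max N1 N2 * D V" if "N = N1 \<or> N = N2" for N V
    using that D[of V] by (auto intro: mult_right_mono)
  show ?case
  proof (rule exI[of _ "max N1 N2"], intro ballI allI)
    fix x V assume "x \<in> insert a A"
    then show "f x V \<le> max N1 N2 * D V"
    proof
      assume "x = a" then show ?thesis using N1 m[of N1 V] by (metis order_trans)
    next
      assume "x \<in> A" then show ?thesis using N2 m[of N2 V] by (metis order_trans)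
    qed
  qed
qed

lemma graph_path:
  fixes V :: "nat \<Rightarrow> real^3"
  assumes "(j, k) \<in> (graph_edges nE src tgt \<union> (graph_edges nE src tgt)\<inverse>)\<^sup>*"
  shows "\<exists>N::real. \<forall>V :: nat \<Rightarrow> real^3. norm (V j - V k)
            \<le> N * (\<Sum>i\<in>{1..nE}. norm (V (src i) - V (tgt i)))"
  using assms
proof (induction rule: rtrancl_induct)
  case base then show ?case by (rule exI[of _ 0]) simp
next
  case (step k m)
  then obtain N where N: "\<forall>V :: nat \<Rightarrow> real^3. norm (V j - V k)
            \<le> N * (\<Sum>i\<in>{1..nE}. norm (V (src i) - V (tgt i)))" by auto
  from step(2) obtain i where i: "i \<in> {1..nE}" and km: "(k, m) = (src i, tgt i) \<or> (m, k) = (src i, tgt i)"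
    unfolding graph_edges_def by auto
  have one: "norm (V k - V m) \<le> (\<Sum>i\<in>{1..nE}. norm (V (src i) - V (tgt i)))" for V :: "nat \<Rightarrow> real^3"
  proof -
    have "norm (V k - V m) = norm (V (src i) - V (tgt i))"
      using km by (auto simp: norm_minus_commute)
    also have "\<dots> \<le> (\<Sum>i\<in>{1..nE}. norm (V (src i) - V (tgt i)))"
      by (rule member_le_sum) (use i in auto)
    finally show ?thesis .
  qed
  show ?case
  proof (rule exI[of _ "N + 1"], intro allI)
    fix V :: "nat \<Rightarrow> real^3"
    have "norm (V j - V m) \<le> norm (V j - V k) + norm (V k - V m)"
      by (rule norm_diff_triangle_le[OF order_refl order_refl])
    also have "\<dots> \<le> N * (\<Sum>i\<in>{1..nE}. norm (V (src i) - V (tgt i))) + (\<Sum>i\<in>{1..nE}. norm (V (src i) - V (tgt i)))"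
      using N one[of V] by (intro add_mono) auto
    finally show "norm (V j - V m) \<le> (N + 1) * (\<Sum>i\<in>{1..nE}. norm (V (src i) - V (tgt i)))"
      by (simp add: algebra_simps)
  qed
qed




lemma LINT_nonneg:
  fixes f :: "real \<Rightarrow> real"
  assumes "\<And>x. 0 \<le> f x"
  shows "0 \<le> (LINT x:A|lborel. f x)"
  unfolding set_lebesgue_integral_def by (rule Bochner_Integration.integral_nonneg) (simp add: assms)

lemma AmT_eq:
  assumes "i \<in> {1..nE}" "src i \<in> {1..nV}"
  shows "AmT nV nE src V i = V (src i)"
proof -
  have "{j\<in>{1..nV}. i \<in> J_minus nE src j} = {src i}"
    using assms unfolding J_minus_def by auto
  then show ?thesis unfolding AmT_def by simp
qed

lemma ApT_eq:
  assumes "i \<in> {1..nE}" "tgt i \<in> {1..nV}"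
  shows "ApT nV nE tgt V i = V (tgt i)"
proof -
  have "{j\<in>{1..nV}. i \<in> J_plus nE tgt j} = {tgt i}"
    using assms unfolding J_plus_def by auto
  then show ?thesis unfolding ApT_def by simp
qed

lemma tri3:
  fixes a b c :: "real^3"
  shows "norm (a + b + c) \<le> norm a + norm b + norm c"
proof -
  have "norm (a + b + c) \<le> norm (a + b) + norm c" by (rule norm_triangle_ineq)
  also have "\<dots> \<le> norm a + norm b + norm c" using norm_triangle_ineq[of a b] by simp
  finally show ?thesis .
qed

lemma sq_le_imp:
  fixes a r :: real
  assumes "a \<ge> 0" "r > 0" "a\<^sup>2 \<le> r\<^sup>2"
  shows "a \<le> r"
  using assms by (meson power2_le_imp_le less_imp_le)

lemma core:
  fixes v w :: "nat \<Rightarrow> real \<Rightarrow> real^3" and V :: "nat \<Rightarrow> real^3" and \<rho> N :: real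
  assumes ends: "\<forall>i\<in>{1..nE}. src i \<in> {1..nV} \<and> tgt i \<in> {1..nV}"
    and nV: "1 \<le> nV"
    and len: "\<forall>i\<in>{1..nE}. len i > 0"
    and Nbd: "\<forall>k\<in>{1..nV}. \<forall>V :: nat \<Rightarrow> real^3. norm (V 1 - V k)
                 \<le> N * (\<Sum>i\<in>{1..nE}. norm (V (src i) - V (tgt i)))"
    and H: "\<forall>i\<in>{1..nE}. H1_with_deriv (len i) (v i) (w i)"
    and rho: "\<rho> > 0"
    and bw: "L2N_sq nE len w \<le> \<rho>\<^sup>2"
    and bI: "(norm (intN nE len v))\<^sup>2 \<le> \<rho>\<^sup>2"
    and bm: "(\<Sum>i\<in>{1..nE}. (norm (v i 0 - AmT nV nE src V i))\<^sup>2) \<le> \<rho>\<^sup>2"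
    and bp: "(\<Sum>i\<in>{1..nE}. (norm (v i (len i) - ApT nV nE tgt V i))\<^sup>2) \<le> \<rho>\<^sup>2"
  defines "Lt \<equiv> (\<Sum>i\<in>{1..nE}. len i)"
  defines "K \<equiv> (\<Sum>i\<in>{1..nE}. 2 + (len i + 1) / 2)"
  defines "M \<equiv> (Lt + 1) / 2 + 1 + \<bar>N\<bar> * K"
  defines "P \<equiv> 2 * M + 1 / Lt"
  shows "sqrt (L2N_sq nE len v) \<le> sqrt Lt * P * \<rho>"
proof -
  let ?E = "{1..nE}"
  have Lt0: "Lt \<ge> 0" unfolding Lt_def using len by (auto intro: sum_nonneg less_imp_le)
  have leLt: "len i \<le> Lt" if "i \<in> ?E" for i
    unfolding Lt_def by (rule member_le_sum) (use that len in \<open>auto intro: less_imp_le\<close>)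
  have K0: "K \<ge> 0" unfolding K_def using len by (auto intro!: sum_nonneg simp: less_imp_le add_nonneg_nonneg)
  have M0: "M \<ge> 0" unfolding M_def using Lt0 K0 by auto
  have P0: "P \<ge> 0" unfolding P_def using M0 Lt0 by auto
  have Wi: "(LINT x:{0..len i}|lborel. (norm (w i x))\<^sup>2) \<le> \<rho>\<^sup>2" if i: "i \<in> ?E" for i
  proof -
    have "(LINT x:{0..len i}|lborel. (norm (w i x))\<^sup>2) \<le> L2N_sq nE len w"
      unfolding L2N_sq_def by (rule member_le_sum) (use i in \<open>auto intro: LINT_nonneg\<close>)
    then show ?thesis using bw by simp
  qed
  have osc: "norm (v i s - v i 0) \<le> (len i + 1) / 2 * \<rho>" if i: "i \<in> ?E" and s: "s \<in> {0..len i}" for i s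
  proof -
    have l: "len i \<ge> 0" using len i by (auto intro: less_imp_le)
    have "norm (v i s - v i 0) \<le> \<rho> * len i / 2 + (LINT x:{0..len i}|lborel. (norm (w i x))\<^sup>2) / (2 * \<rho>)"
      by (rule H1_bound[OF _ l rho s]) (use H i in auto)
    also have "\<dots> \<le> \<rho> * len i / 2 + \<rho>\<^sup>2 / (2 * \<rho>)"
      using Wi[OF i] rho by (intro add_left_mono divide_right_mono) auto
    also have "\<dots> = (len i + 1) / 2 * \<rho>" using rho by (simp add: power2_eq_square field_simps)
    finally show ?thesis .
  qed
  have am: "norm (v i 0 - V (src i)) \<le> \<rho>" if i: "i \<in> ?E" for i
  proof -
    have h1: "(norm (v i 0 - AmT nV nE src V i))\<^sup>2 \<le> (\<Sum>i\<in>{1..nE}. (norm (v i 0 - AmT nV nE src V i))\<^sup>2)"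
      by (rule member_le_sum) (use i in auto)
    have eqA: "AmT nV nE src V i = V (src i)" by (rule AmT_eq[OF i]) (use ends i in auto)
    have "(norm (v i 0 - V (src i)))\<^sup>2 \<le> \<rho>\<^sup>2" using order_trans[OF h1 bm] unfolding eqA .
    then show ?thesis by (rule sq_le_imp[OF norm_ge_zero rho])
  qed
  have ap: "norm (v i (len i) - V (tgt i)) \<le> \<rho>" if i: "i \<in> ?E" for i
  proof -
    have h1: "(norm (v i (len i) - ApT nV nE tgt V i))\<^sup>2 \<le> (\<Sum>i\<in>{1..nE}. (norm (v i (len i) - ApT nV nE tgt V i))\<^sup>2)"
      by (rule member_le_sum) (use i in auto)
    have eqA: "ApT nV nE tgt V i = V (tgt i)" by (rule ApT_eq[OF i]) (use ends i in auto)
    have "(norm (v i (len i) - V (tgt i)))\<^sup>2 \<le> \<rho>\<^sup>2" using order_trans[OF h1 bp] unfolding eqA .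
    then show ?thesis by (rule sq_le_imp[OF norm_ge_zero rho])
  qed
  have edge: "norm (V (src i) - V (tgt i)) \<le> (2 + (len i + 1) / 2) * \<rho>" if i: "i \<in> ?E" for i
  proof -
    have s: "len i \<in> {0..len i}" using len i by (auto intro: less_imp_le)
    have eq: "V (src i) - V (tgt i) = (V (src i) - v i 0) + (v i 0 - v i (len i)) + (v i (len i) - V (tgt i))"
      by (simp add: algebra_simps)
    have "norm (V (src i) - V (tgt i)) \<le> norm (V (src i) - v i 0) + norm (v i 0 - v i (len i)) + norm (v i (len i) - V (tgt i))"
      unfolding eq by (rule tri3)
    also have "\<dots> \<le> \<rho> + (len i + 1) / 2 * \<rho> + \<rho>"
      using am[OF i] osc[OF i s] ap[OF i] by (intro add_mono) (auto simp: norm_minus_commute)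
    finally show ?thesis by (simp add: algebra_simps)
  qed
  have DK: "(\<Sum>i\<in>?E. norm (V (src i) - V (tgt i))) \<le> K * \<rho>"
    unfolding K_def sum_distrib_right by (rule sum_mono) (rule edge)
  define c where "c = V 1"
  have vc: "norm (V (src i) - c) \<le> \<bar>N\<bar> * K * \<rho>" if i: "i \<in> ?E" for i
  proof -
    have D0: "0 \<le> (\<Sum>i\<in>?E. norm (V (src i) - V (tgt i)))" by (auto intro: sum_nonneg)
    have "norm (V (src i) - c) = norm (V 1 - V (src i))" unfolding c_def by (simp add: norm_minus_commute)
    also have "\<dots> \<le> N * (\<Sum>i\<in>?E. norm (V (src i) - V (tgt i)))" using Nbd ends i by blast
    also have "\<dots> \<le> \<bar>N\<bar> * (\<Sum>i\<in>?E. norm (V (src i) - V (tgt i)))"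
      using D0 by (intro mult_right_mono) auto
    also have "\<dots> \<le> \<bar>N\<bar> * (K * \<rho>)" using DK by (intro mult_left_mono) auto
    finally show ?thesis by (simp add: mult.assoc)
  qed
  have pc: "norm (v i s - c) \<le> M * \<rho>" if i: "i \<in> ?E" and s: "s \<in> {0..len i}" for i s
  proof -
    have eq: "v i s - c = (v i s - v i 0) + (v i 0 - V (src i)) + (V (src i) - c)" by (simp add: algebra_simps)
    have "norm (v i s - c) \<le> norm (v i s - v i 0) + norm (v i 0 - V (src i)) + norm (V (src i) - c)"
      unfolding eq by (rule tri3)
    also have "\<dots> \<le> (len i + 1) / 2 * \<rho> + \<rho> + \<bar>N\<bar> * K * \<rho>"
      using osc[OF i s] am[OF i] vc[OF i] by (intro add_mono) auto
    also have "\<dots> \<le> M * \<rho>"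
    proof -
      have "(len i + 1) / 2 * \<rho> \<le> (Lt + 1) / 2 * \<rho>" using leLt[OF i] rho by (intro mult_right_mono) auto
      then show ?thesis unfolding M_def by (simp add: algebra_simps)
    qed
    finally show ?thesis .
  qed
  have cont: "continuous_on {0..len i} (v i)" if i: "i \<in> ?E" for i
  proof -
    have h: "H1_with_deriv (len i) (v i) (w i)" using H i by blast
    have "0 \<le> len i" using len i by (auto intro: less_imp_le)
    then show ?thesis by (rule H1_facts(4)[OF h])
  qed
  show ?thesis
  proof (cases "nE = 0")
    case True
    then show ?thesis unfolding L2N_sq_def using P0 Lt0 rho by simp
  next
    case False
    then have "1 \<in> ?E" by auto
    then have Ltp: "Lt > 0" using len leLt[of 1] by fastforce
    have "norm (intN nE len v - Lt *\<^sub>R c) = norm (\<Sum>i\<in>?E. (LINT s:{0..len i}|lborel. v i s) - len i *\<^sub>R c)"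
      unfolding intN_def Lt_def scaleR_sum_left sum_subtractf ..
    also have "\<dots> \<le> (\<Sum>i\<in>?E. norm ((LINT s:{0..len i}|lborel. v i s) - len i *\<^sub>R c))"
      by (rule norm_sum)
    also have "\<dots> \<le> (\<Sum>i\<in>?E. len i * (M * \<rho>))"
    proof (rule sum_mono)
      fix i assume i: "i \<in> ?E"
      have l: "0 \<le> len i" using len i by (auto intro: less_imp_le)
      show "norm ((LINT s:{0..len i}|lborel. v i s) - len i *\<^sub>R c) \<le> len i * (M * \<rho>)"
        by (rule v_int_bound[OF l cont[OF i] pc[OF i]])
    qed
    also have "\<dots> = Lt * M * \<rho>" unfolding Lt_def sum_distrib_right by (simp add: mult.assoc)
    finally have i1: "norm (intN nE len v - Lt *\<^sub>R c) \<le> Lt * M * \<rho>" .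
    have i2: "norm (intN nE len v) \<le> \<rho>" by (rule sq_le_imp[OF norm_ge_zero rho bI])
    have "Lt * norm c = norm (Lt *\<^sub>R c)" using Lt0 by simp
    also have "\<dots> \<le> norm (intN nE len v) + norm (intN nE len v - Lt *\<^sub>R c)"
      by (metis norm_triangle_sub add.commute norm_minus_commute)
    also have "\<dots> \<le> \<rho> + Lt * M * \<rho>" using i1 i2 by simp
    finally have "Lt * norm c \<le> \<rho> + Lt * M * \<rho>" .
    then have nc: "norm c \<le> \<rho> / Lt + M * \<rho>" using Ltp by (simp add: field_simps)
    have pv: "norm (v i s) \<le> P * \<rho>" if i: "i \<in> ?E" and s: "s \<in> {0..len i}" for i s
    proof -
      have "norm (v i s) \<le> norm (v i s - c) + norm c" using norm_triangle_ineq[of "v i s - c" c] by simp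
      also have "\<dots> \<le> M * \<rho> + (\<rho> / Lt + M * \<rho>)" using pc[OF i s] nc by simp
      also have "\<dots> = P * \<rho>" unfolding P_def by (simp add: algebra_simps)
      finally show ?thesis .
    qed
    have "L2N_sq nE len v \<le> (\<Sum>i\<in>?E. len i * (P * \<rho>)\<^sup>2)"
      unfolding L2N_sq_def
    proof (rule sum_mono)
      fix i assume i: "i \<in> ?E"
      have l: "0 \<le> len i" using len i by (auto intro: less_imp_le)
      show "(LINT s:{0..len i}|lborel. (norm (v i s))\<^sup>2) \<le> len i * (P * \<rho>)\<^sup>2"
        by (rule v_sq_bound[OF l cont[OF i] pv[OF i]])
    qed
    also have "\<dots> = Lt * (P * \<rho>)\<^sup>2" unfolding Lt_def sum_distrib_right ..
    finally have L: "L2N_sq nE len v \<le> (sqrt Lt * P * \<rho>)\<^sup>2"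
      using Lt0 by (simp add: power_mult_distrib)
    show ?thesis by (rule real_le_lsqrt[OF _ L]) (use P0 Lt0 rho in simp)
  qed
qed




theorem lemma3p2:
  fixes nV nE :: nat and src tgt :: "nat \<Rightarrow> nat" and len :: "nat \<Rightarrow> real"
  assumes "connected_graph nV nE src tgt"
    and "\<forall>i\<in>{1..nE}. len i > 0"
  shows "\<exists>C>0. \<forall>(v :: nat \<Rightarrow> real \<Rightarrow> real^3) (w :: nat \<Rightarrow> real \<Rightarrow> real^3) (V :: nat \<Rightarrow> real^3).
           (\<forall>i\<in>{1..nE}. H1_with_deriv (len i) (v i) (w i)) \<longrightarrow>
           sqrt (L2N_sq nE len v) \<le>
             C * sqrt (L2N_sq nE len w + (norm (intN nE len v))\<^sup>2
                  + (\<Sum>i\<in>{1..nE}. (norm (v i 0 - AmT nV nE src V i))\<^sup>2)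
                  + (\<Sum>i\<in>{1..nE}. (norm (v i (len i) - ApT nV nE tgt V i))\<^sup>2))"
proof -
  have nV: "1 \<le> nV" and ends: "\<forall>i\<in>{1..nE}. src i \<in> {1..nV} \<and> tgt i \<in> {1..nV}"
    and conn: "\<forall>j\<in>{1..nV}. \<forall>k\<in>{1..nV}.
        (j, k) \<in> (graph_edges nE src tgt \<union> (graph_edges nE src tgt)\<inverse>)\<^sup>*"
    using assms(1) unfolding connected_graph_def by auto
  have "\<exists>N. \<forall>k\<in>{1..nV}. \<forall>V :: nat \<Rightarrow> real^3. norm (V 1 - V k)
                 \<le> N * (\<Sum>i\<in>{1..nE}. norm (V (src i) - V (tgt i)))"
  proof (rule finite_unif)
    fix k assume k: "k \<in> {1..nV}"
    have "(1, k) \<in> (graph_edges nE src tgt \<union> (graph_edges nE src tgt)\<inverse>)\<^sup>*"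
      using conn nV k by auto
    then show "\<exists>N. \<forall>V :: nat \<Rightarrow> real^3. norm (V 1 - V k)
                 \<le> N * (\<Sum>i\<in>{1..nE}. norm (V (src i) - V (tgt i)))"
      by (rule graph_path)
  qed (auto intro: sum_nonneg)
  then obtain N where Nbd: "\<forall>k\<in>{1..nV}. \<forall>V :: nat \<Rightarrow> real^3. norm (V 1 - V k)
                 \<le> N * (\<Sum>i\<in>{1..nE}. norm (V (src i) - V (tgt i)))" by blast
  have "\<exists>C0. \<forall>(v :: nat \<Rightarrow> real \<Rightarrow> real^3) (w :: nat \<Rightarrow> real \<Rightarrow> real^3) (V :: nat \<Rightarrow> real^3) \<rho>.
     (\<forall>i\<in>{1..nE}. H1_with_deriv (len i) (v i) (w i)) \<and> \<rho> > 0 \<and>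
     L2N_sq nE len w \<le> \<rho>\<^sup>2 \<and> (norm (intN nE len v))\<^sup>2 \<le> \<rho>\<^sup>2 \<and>
     (\<Sum>i\<in>{1..nE}. (norm (v i 0 - AmT nV nE src V i))\<^sup>2) \<le> \<rho>\<^sup>2 \<and>
     (\<Sum>i\<in>{1..nE}. (norm (v i (len i) - ApT nV nE tgt V i))\<^sup>2) \<le> \<rho>\<^sup>2
     \<longrightarrow> sqrt (L2N_sq nE len v) \<le> C0 * \<rho>"
    apply (rule exI, intro allI impI, elim conjE)
    apply (rule core[OF ends nV assms(2) Nbd])
    apply assumption+
    done
  then obtain C0 where C0: "\<forall>(v :: nat \<Rightarrow> real \<Rightarrow> real^3) (w :: nat \<Rightarrow> real \<Rightarrow> real^3) (V :: nat \<Rightarrow> real^3) \<rho>.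
     (\<forall>i\<in>{1..nE}. H1_with_deriv (len i) (v i) (w i)) \<and> \<rho> > 0 \<and>
     L2N_sq nE len w \<le> \<rho>\<^sup>2 \<and> (norm (intN nE len v))\<^sup>2 \<le> \<rho>\<^sup>2 \<and>
     (\<Sum>i\<in>{1..nE}. (norm (v i 0 - AmT nV nE src V i))\<^sup>2) \<le> \<rho>\<^sup>2 \<and>
     (\<Sum>i\<in>{1..nE}. (norm (v i (len i) - ApT nV nE tgt V i))\<^sup>2) \<le> \<rho>\<^sup>2
     \<longrightarrow> sqrt (L2N_sq nE len v) \<le> C0 * \<rho>" by blast
  define C where "C = \<bar>C0\<bar> + 1"
  have Cp: "C > 0" unfolding C_def by simp
  show ?thesis
  proof (rule exI[of _ C], intro conjI Cp allI impI)
    fix v w :: "nat \<Rightarrow> real \<Rightarrow> real^3" and V :: "nat \<Rightarrow> real^3"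
    assume H: "\<forall>i\<in>{1..nE}. H1_with_deriv (len i) (v i) (w i)"
    define a where "a = L2N_sq nE len w"
    define b where "b = (norm (intN nE len v))\<^sup>2"
    define cm where "cm = (\<Sum>i\<in>{1..nE}. (norm (v i 0 - AmT nV nE src V i))\<^sup>2)"
    define cp where "cp = (\<Sum>i\<in>{1..nE}. (norm (v i (len i) - ApT nV nE tgt V i))\<^sup>2)"
    define x where "x = sqrt (L2N_sq nE len v)"
    have a0: "a \<ge> 0" unfolding a_def L2N_sq_def by (intro sum_nonneg LINT_nonneg) simp
    have b0: "b \<ge> 0" unfolding b_def by simp
    have cm0: "cm \<ge> 0" unfolding cm_def by (intro sum_nonneg) simp
    have cp0: "cp \<ge> 0" unfolding cp_def by (intro sum_nonneg) simp
    have key: "x \<le> C * \<rho>" if r: "\<rho> > 0" and le: "a + b + cm + cp \<le> \<rho>\<^sup>2" for \<rho>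
    proof -
      have "x \<le> C0 * \<rho>"
        unfolding x_def
      proof (rule C0[THEN spec, THEN spec, THEN spec, THEN spec, THEN mp], intro conjI)
        show "L2N_sq nE len w \<le> \<rho>\<^sup>2" using le a0 b0 cm0 cp0 unfolding a_def by linarith
        show "(norm (intN nE len v))\<^sup>2 \<le> \<rho>\<^sup>2" using le a0 b0 cm0 cp0 unfolding b_def by linarith
        show "(\<Sum>i\<in>{1..nE}. (norm (v i 0 - AmT nV nE src V i))\<^sup>2) \<le> \<rho>\<^sup>2"
          using le a0 b0 cm0 cp0 unfolding cm_def by linarith
        show "(\<Sum>i\<in>{1..nE}. (norm (v i (len i) - ApT nV nE tgt V i))\<^sup>2) \<le> \<rho>\<^sup>2"
          using le a0 b0 cm0 cp0 unfolding cp_def by linarith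
      qed (use H r in auto)
      also have "\<dots> \<le> C * \<rho>" unfolding C_def using r by (intro mult_right_mono) auto
      finally show ?thesis .
    qed
    let ?S = "a + b + cm + cp"
    have S0: "?S \<ge> 0" using a0 b0 cm0 cp0 by simp
    show "sqrt (L2N_sq nE len v) \<le> C * sqrt (a + b + cm + cp)"
    proof (cases "?S > 0")
      case True
      have r: "sqrt ?S > 0" using True by simp
      have q: "?S \<le> (sqrt ?S)\<^sup>2" using S0 by simp
      have "x \<le> C * sqrt ?S" by (rule key[OF r q])
      then show ?thesis unfolding x_def .
    next
      case False
      then have S: "?S = 0" using S0 by simp
      have "x \<le> 0"
      proof (rule ccontr)
        assume "\<not> x \<le> 0"
        then have xp: "x > 0" by simp
        have "x \<le> C * (x / (2 * C))" using key[of "x / (2 * C)"] xp Cp S by simp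
        also have "\<dots> = x / 2" using Cp by simp
        finally show False using xp by simp
      qed
      then show ?thesis using S by (simp add: x_def)
    qed
  qed
qed


end
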